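(* Let $V$ be a fixed set of $n$ vertices and $\epsilon>0$. Consider the algorithm ALG that, given a private edge set $E$ on $V$, sets $V_1=V$, $E_1=E$ and for $i=1,\dots,n$: lets $w_i=(4/\epsilon)\sqrt{n/(n-i+1)}$, picks a vertex $v\in V_i$ with probability proportional to $d_{E_i}(v)+w_i$, outputs $v$, and sets $V_{i+1}=V_i\setminus\{v\}$ and $E_{i+1}=E_i$ minus all edges incident to $v$. The output is thus a permutation of $V$. Then ALG is $\epsilon$-differentially private: for any two edge sets $A,B$ on $V$ whose symmetric difference is a single edge and any set $\mathcal{P}$ of permutations, $\Pr[\mathrm{ALG}(A)\in\mathcal{P}]\le e^{\epsilon}\Pr[\mathrm{ALG}(B)\in\mathcal{P}]$.
   Context: $d_{E_i}(v)$ denotes the number of edges in $E_i$ incident to $v$. *)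

theory Defs
  imports "HOL-Probability.Probability"
begin

definition edge_set_on :: "'a set \<Rightarrow> 'a set set \<Rightarrow> bool" where
  "edge_set_on V E \<longleftrightarrow> (\<forall>e\<in>E. e \<subseteq> V \<and> card e = 2)"

definition deg :: "'a set set \<Rightarrow> 'a \<Rightarrow> nat" where
  "deg E v = card {e \<in> E. v \<in> e}"

definition remove_incident :: "'a set set \<Rightarrow> 'a \<Rightarrow> 'a set set" where
  "remove_incident E v = {e \<in> E. v \<notin> e}"

definition weighted_choice :: "('a \<Rightarrow> real) \<Rightarrow> 'a set \<Rightarrow> 'a pmf" where
  "weighted_choice f S = embed_pmf (\<lambda>v. if v \<in> S then f v / (\<Sum>u\<in>S. f u) else 0)"

definition noise_weight :: "real \<Rightarrow> nat \<Rightarrow> nat \<Rightarrow> real" where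
  "noise_weight eps n i = (4 / eps) * sqrt (real n / (real n - real i + 1))"

text \<open>Remaining iterations of ALG: with k iterations left, the current step index is
  i = n - k + 1 (so steps run i = 1..n when started with k = n).\<close>
primrec alg_rec :: "real \<Rightarrow> nat \<Rightarrow> nat \<Rightarrow> 'a set \<Rightarrow> 'a set set \<Rightarrow> 'a list pmf" where
  "alg_rec eps n 0 Vi Ei = return_pmf []"
| "alg_rec eps n (Suc k) Vi Ei =
     bind_pmf
       (weighted_choice (\<lambda>u. real (deg Ei u) + noise_weight eps n (n - k)) Vi)
       (\<lambda>v. map_pmf (\<lambda>rest. v # rest)
               (alg_rec eps n k (Vi - {v}) (remove_incident Ei v)))"

definition ALG :: "real \<Rightarrow> 'a set \<Rightarrow> 'a set set \<Rightarrow> 'a list pmf" where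
  "ALG eps V E = alg_rec eps (card V) (card V) V E"

end

theory Submission imports Defs begin

lemma pmf_wc:
  assumes "finite S" "S \<noteq> {}" "\<And>x. x \<in> S \<Longrightarrow> f x > 0"
  shows "pmf (weighted_choice f S) x = (if x \<in> S then f x / sum f S else 0)"
proof -
  have pos: "sum f S > 0" using assms by (meson sum_pos)
  let ?g = "\<lambda>v. if v \<in> S then f v / (\<Sum>u\<in>S. f u) else 0"
  have nn: "\<And>v. 0 \<le> ?g v" using assms pos by (auto intro: less_imp_le)
  have "(\<integral>\<^sup>+v. ennreal (?g v) \<partial>count_space UNIV) = (\<Sum>v\<in>S. ennreal (?g v))"
    by (rule nn_integral_count_space') (use assms in auto)
  also have "\<dots> = ennreal (\<Sum>v\<in>S. ?g v)"
    by (rule sum_ennreal, rule nn)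
  also have "(\<Sum>v\<in>S. ?g v) = 1"
    using pos by (simp add: sum_divide_distrib[symmetric])
  finally have "(\<integral>\<^sup>+v. ennreal (?g v) \<partial>count_space UNIV) = 1" by simp
  then show ?thesis unfolding weighted_choice_def
    using pmf_embed_pmf[of ?g x] nn by simp
qed

lemma pmf_alg_nil: "pmf (alg_rec eps n (Suc k) Vi E) [] = 0"
  by (auto simp add: pmf_eq_0_set_pmf)

lemma pmf_alg_cons:
  "pmf (alg_rec eps n (Suc k) Vi E) (y # ys) =
   pmf (weighted_choice (\<lambda>u. real (deg E u) + noise_weight eps n (n - k)) Vi) y *
   pmf (alg_rec eps n k (Vi - {y}) (remove_incident E y)) ys"
proof -
  let ?p = "weighted_choice (\<lambda>u. real (deg E u) + noise_weight eps n (n - k)) Vi"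
  let ?q = "\<lambda>v. alg_rec eps n k (Vi - {v}) (remove_incident E v)"
  have eq: "\<And>v. pmf (map_pmf (\<lambda>rest. v # rest) (?q v)) (y # ys) = (if v = y then pmf (?q y) ys else 0)"
  proof -
    fix v
    have "(\<lambda>rest. v # rest) -` {y # ys} = (if v = y then {ys} else {})" by auto
    then show "pmf (map_pmf (\<lambda>rest. v # rest) (?q v)) (y # ys) = (if v = y then pmf (?q y) ys else 0)"
      by (simp add: pmf_map measure_pmf_single)
  qed
  have "pmf (alg_rec eps n (Suc k) Vi E) (y # ys) = (LINT v|?p. (if v = y then pmf (?q y) ys else 0))"
    by (simp add: pmf_bind eq)
  also have "\<dots> = (\<Sum>a\<in>{y}. pmf ?p a *\<^sub>R (if a = y then pmf (?q y) ys else 0))"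
    by (rule integral_measure_pmf) (auto split: if_split_asm)
  finally show ?thesis by simp
qed

lemma deg_insert: "finite F \<Longrightarrow> e \<notin> F \<Longrightarrow> deg (insert e F) x = deg F x + (if x \<in> e then 1 else 0)"
proof -
  assume "finite F" "e \<notin> F"
  have "{e' \<in> insert e F. x \<in> e'} = (if x \<in> e then insert e {e' \<in> F. x \<in> e'} else {e' \<in> F. x \<in> e'})" by auto
  then show ?thesis using \<open>finite F\<close> \<open>e \<notin> F\<close> by (simp add: deg_def)
qed

lemma sum_deg:
  assumes "finite Vi" "finite F" "e \<notin> F" "e \<subseteq> Vi" "card e = 2"
  shows "(\<Sum>x\<in>Vi. real (deg (insert e F) x) + W) = (\<Sum>x\<in>Vi. real (deg F x) + W) + 2"
proof -
  have "(\<Sum>x\<in>Vi. real (deg (insert e F) x) + W) = (\<Sum>x\<in>Vi. (real (deg F x) + W) + (if x \<in> e then 1 else 0))"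
    using assms by (intro sum.cong) (auto simp add: deg_insert)
  also have "\<dots> = (\<Sum>x\<in>Vi. real (deg F x) + W) + (\<Sum>x\<in>Vi. (if x \<in> e then 1 else 0))"
    by (simp add: sum.distrib)
  also have "(\<Sum>x\<in>Vi. (if x \<in> e then 1 else 0::real)) = real (card (Vi \<inter> e))"
    using assms(1) by (simp add: sum.If_cases)
  also have "Vi \<inter> e = e" using assms by auto
  finally show ?thesis using assms by simp
qed

lemma W_eq: "Suc k \<le> n \<Longrightarrow> noise_weight eps n (n - k) = (4/eps) * sqrt (real n / real (Suc k))"
  by (simp add: noise_weight_def of_nat_diff)

lemma pmf_wc_deg:
  assumes "finite Vi" "Vi \<noteq> {}" "W > 0"
  shows "pmf (weighted_choice (\<lambda>u. real (deg E u) + W) Vi) y =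
     (if y \<in> Vi then (real (deg E y) + W) / (\<Sum>x\<in>Vi. real (deg E x) + W) else 0)"
  by (rule pmf_wc) (use assms in \<open>auto intro: add_nonneg_pos\<close>)

lemma W_props:
  assumes "eps > 0" "Suc k \<le> n"
  shows "noise_weight eps n (n - k) > 0" "noise_weight eps n (n - k) \<ge> 4 / eps"
proof -
  have "real n / real (Suc k) \<ge> 1" using assms by (simp add: divide_simps del: of_nat_Suc)
  then have s: "sqrt (real n / real (Suc k)) \<ge> 1" by simp
  show "noise_weight eps n (n - k) \<ge> 4 / eps"
    using W_eq[OF assms(2)] s assms(1)
    by (metis mult_le_cancel_left1 divide_pos_pos zero_less_numeral order_less_imp_not_less)
  then show "noise_weight eps n (n - k) > 0" using assms(1)
    by (smt (verit) divide_pos_pos)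
qed

lemma sum_le_deg:
  assumes "finite Vi" "y \<in> Vi" "W > 0"
  shows "real (deg E y) + W \<le> (\<Sum>x\<in>Vi. real (deg E x) + W)"
  by (rule member_le_sum) (use assms in auto)

lemma dir1:
  assumes eps: "eps > 0"
  shows "card Vi = k \<Longrightarrow> finite Vi \<Longrightarrow> k \<le> n \<Longrightarrow> finite F \<Longrightarrow> e \<notin> F \<Longrightarrow> e \<subseteq> Vi \<Longrightarrow> card e = 2 \<Longrightarrow>
    pmf (alg_rec eps n k Vi (insert e F)) xs \<le> (1 + eps/4) * pmf (alg_rec eps n k Vi F) xs"
proof (induction k arbitrary: Vi F xs)
  case 0
  then have "Vi = {}" by simp
  with 0 have False by auto
  then show ?case ..
next
  case (Suc k)
  define W where "W = noise_weight eps n (n - k)"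
  have Wpos: "W > 0" and Wge: "W \<ge> 4 / eps" using W_props[OF eps, of k n] Suc.prems W_def by auto
  have ne: "Vi \<noteq> {}" using Suc.prems by auto
  show ?case
  proof (cases xs)
    case Nil then show ?thesis by (simp only: pmf_alg_nil)
  next
    case (Cons y ys)
    show ?thesis
    proof (cases "y \<in> Vi")
      case False
      then show ?thesis unfolding Cons pmf_alg_cons W_def[symmetric]
        by (simp add: pmf_wc_deg[OF Suc.prems(2) ne Wpos] W_def[symmetric])
    next
      case yV: True
      define dF where "dF = real (deg F y)"
      define DF where "DF = (\<Sum>x\<in>Vi. real (deg F x) + W)"
      define rE where "rE = pmf (alg_rec eps n k (Vi - {y}) (remove_incident (insert e F) y)) ys"
      define rF where "rF = pmf (alg_rec eps n k (Vi - {y}) (remove_incident F y)) ys"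
      have rF0: "rF \<ge> 0" unfolding rF_def by simp
      have dF0: "dF \<ge> 0" unfolding dF_def by simp
      have DFge: "DF \<ge> dF + W" unfolding DF_def dF_def by (rule sum_le_deg[OF Suc.prems(2) yV Wpos])
      have DFpos: "DF > 0" using DFge dF0 Wpos by linarith
      have sE: "(\<Sum>x\<in>Vi. real (deg (insert e F) x) + W) = DF + 2"
        unfolding DF_def by (rule sum_deg) (use Suc.prems in auto)
      have L: "pmf (alg_rec eps n (Suc k) Vi (insert e F)) xs =
          (dF + (if y \<in> e then 1 else 0) + W) / (DF + 2) * rE"
        unfolding Cons pmf_alg_cons W_def[symmetric] pmf_wc_deg[OF Suc.prems(2) ne Wpos] sE
        using yV Suc.prems
        by (simp add: 
            deg_insert dF_def rE_def)
      have R: "pmf (alg_rec eps n (Suc k) Vi F) xs = (dF + W) / DF * rF"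
        unfolding Cons pmf_alg_cons W_def[symmetric] using yV
        by (simp add: pmf_wc_deg[OF Suc.prems(2) ne Wpos] W_def[symmetric]
            DF_def dF_def rF_def)
      show ?thesis
      proof (cases "y \<in> e")
        case True
        have "remove_incident (insert e F) y = remove_incident F y"
          using True by (auto simp: remove_incident_def)
        then have rr: "rE = rF" unfolding rE_def rF_def by simp
        have a: "dF + 1 + W \<le> (1 + eps/4) * (dF + W)"
        proof -
          have "eps/4 * W \<ge> eps/4 * (4/eps)" using Wge eps by (intro mult_left_mono) auto
          then have "eps/4 * W \<ge> 1" using eps by simp
          moreover have "eps/4 * dF \<ge> 0" using eps dF0 by simp
          ultimately show ?thesis by (simp add: algebra_simps)
        qed
        have "(dF + 1 + W) / (DF + 2) \<le> (dF + 1 + W) / DF"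
          using DFpos dF0 Wpos by (intro frac_le) auto
        also have "\<dots> \<le> (1 + eps/4) * (dF + W) / DF"
          using a DFpos by (intro divide_right_mono) auto
        finally have "(dF + 1 + W) / (DF + 2) * rF \<le> (1 + eps/4) * (dF + W) / DF * rF"
          using rF0 by (intro mult_right_mono) auto
        then show ?thesis using L R rr True by simp
      next
        case False
        have "remove_incident (insert e F) y = insert e (remove_incident F y)"
          using False by (auto simp: remove_incident_def)
        then have IH: "rE \<le> (1 + eps/4) * rF" unfolding rE_def rF_def
          apply simp
          apply (rule Suc.IH)
          using Suc.prems yV False by (auto simp: remove_incident_def)
        have "(dF + W) / (DF + 2) \<le> (dF + W) / DF"
          using DFpos dF0 Wpos by (intro frac_le) auto
        moreover have "rE \<ge> 0" unfolding rE_def by simp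
        ultimately have c1: "(dF + W) / (DF + 2) * rE \<le> (dF + W) / DF * ((1 + eps/4) * rF)"
          using IH dF0 Wpos DFpos by (intro mult_mono) auto
        have c2: "(dF + W) / DF * ((1 + eps/4) * rF) = (1 + eps/4) * ((dF + W) / DF * rF)"
          by (simp only: mult_ac)
        have fin: "(dF + W) / (DF + 2) * rE \<le> (1 + eps/4) * ((dF + W) / DF * rF)"
          using c1 c2 by linarith
        show ?thesis unfolding L R using fin False by simp
      qed
    qed
  qed
qed

definition cfac :: "real \<Rightarrow> nat \<Rightarrow> nat \<Rightarrow> real" where
  "cfac eps n k = (\<Prod>j<k. 1 + 2 / (real (Suc j) * noise_weight eps n (n - j)))"

lemma cfac_ge1: "eps > 0 \<Longrightarrow> k \<le> n \<Longrightarrow> cfac eps n k \<ge> 1"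
  unfolding cfac_def
proof (rule prod_ge_1)
  fix j assume "eps > 0" "k \<le> n" "j \<in> {..<k}"
  then have "noise_weight eps n (n - j) > 0" using W_props(1)[of eps j n] by auto
  then show "1 \<le> 1 + 2 / (real (Suc j) * noise_weight eps n (n - j))" by simp
qed

lemma dir2:
  assumes eps: "eps > 0"
  shows "card Vi = k \<Longrightarrow> finite Vi \<Longrightarrow> k \<le> n \<Longrightarrow> finite F \<Longrightarrow> e \<notin> F \<Longrightarrow> e \<subseteq> Vi \<Longrightarrow> card e = 2 \<Longrightarrow>
    pmf (alg_rec eps n k Vi F) xs \<le> cfac eps n k * pmf (alg_rec eps n k Vi (insert e F)) xs"
proof (induction k arbitrary: Vi F xs)
  case 0
  then have "Vi = {}" by simp
  with 0 have False by auto
  then show ?case ..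
next
  case (Suc k)
  define W where "W = noise_weight eps n (n - k)"
  have Wpos: "W > 0" using W_props[OF eps, of k n] Suc.prems W_def by auto
  have ne: "Vi \<noteq> {}" using Suc.prems by auto
  define g where "g = 1 + 2 / (real (Suc k) * W)"
  have cS: "cfac eps n (Suc k) = cfac eps n k * g"
    unfolding cfac_def g_def W_def by simp
  have c1: "cfac eps n k \<ge> 1" using cfac_ge1[OF eps, of k n] Suc.prems by simp
  have g0: "g \<ge> 0" unfolding g_def using Wpos by simp
  show ?case
  proof (cases xs)
    case Nil then show ?thesis by (simp only: pmf_alg_nil)
  next
    case (Cons y ys)
    show ?thesis
    proof (cases "y \<in> Vi")
      case False
      then show ?thesis unfolding Cons pmf_alg_cons W_def[symmetric]
        by (simp add: pmf_wc_deg[OF Suc.prems(2) ne Wpos])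
    next
      case yV: True
      define dF where "dF = real (deg F y)"
      define DF where "DF = (\<Sum>x\<in>Vi. real (deg F x) + W)"
      define rE where "rE = pmf (alg_rec eps n k (Vi - {y}) (remove_incident (insert e F) y)) ys"
      define rF where "rF = pmf (alg_rec eps n k (Vi - {y}) (remove_incident F y)) ys"
      have rE0: "rE \<ge> 0" unfolding rE_def by simp
      have rF0: "rF \<ge> 0" unfolding rF_def by simp
      have dF0: "dF \<ge> 0" unfolding dF_def by simp
      have DFge: "DF \<ge> real (Suc k) * W"
      proof -
        have "(\<Sum>x\<in>Vi. W) \<le> DF" unfolding DF_def by (intro sum_mono) auto
        then show ?thesis using Suc.prems by simp
      qed
      have D0pos: "real (Suc k) * W > 0" using Wpos by simp
      have DFpos: "DF > 0" using DFge D0pos by linarith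
      have key: "1 / DF \<le> g / (DF + 2)"
      proof -
        have "DF / (real (Suc k) * W) \<ge> 1" using DFge D0pos by simp
        then have "2 * (DF / (real (Suc k) * W)) \<ge> 2" by simp
        then have "g * DF \<ge> DF + 2" unfolding g_def by (simp add: algebra_simps)
        then show ?thesis using DFpos by (simp add: divide_simps)
      qed
      have sE: "(\<Sum>x\<in>Vi. real (deg (insert e F) x) + W) = DF + 2"
        unfolding DF_def by (rule sum_deg) (use Suc.prems in auto)
      have L: "pmf (alg_rec eps n (Suc k) Vi (insert e F)) xs =
          (dF + (if y \<in> e then 1 else 0) + W) / (DF + 2) * rE"
        unfolding Cons pmf_alg_cons W_def[symmetric] pmf_wc_deg[OF Suc.prems(2) ne Wpos] sE
        using yV Suc.prems
        by (simp add: deg_insert dF_def rE_def)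
      have R: "pmf (alg_rec eps n (Suc k) Vi F) xs = (dF + W) / DF * rF"
        unfolding Cons pmf_alg_cons W_def[symmetric] using yV
        by (simp add: pmf_wc_deg[OF Suc.prems(2) ne Wpos] DF_def dF_def rF_def)
      have step: "(dF + W) / DF \<le> g * ((dF + W) / (DF + 2))"
      proof -
        have "(dF + W) * (1 / DF) \<le> (dF + W) * (g / (DF + 2))"
          using key dF0 Wpos by (intro mult_left_mono) auto
        then show ?thesis by (simp add: mult.commute)
      qed
      show ?thesis
      proof (cases "y \<in> e")
        case True
        have "remove_incident (insert e F) y = remove_incident F y"
          using True by (auto simp: remove_incident_def)
        then have rr: "rE = rF" unfolding rE_def rF_def by simp
        have "(dF + W) / (DF + 2) \<le> (dF + 1 + W) / (DF + 2)"
          using DFpos by (intro divide_right_mono) auto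
        then have "g * ((dF + W) / (DF + 2)) \<le> cfac eps n k * g * ((dF + 1 + W) / (DF + 2))"
        proof -
          assume h: "(dF + W) / (DF + 2) \<le> (dF + 1 + W) / (DF + 2)"
          have g0: "g \<ge> 0" unfolding g_def using D0pos by simp
          have "g * ((dF + W) / (DF + 2)) \<le> g * ((dF + 1 + W) / (DF + 2))"
            using h g0 by (rule mult_left_mono)
          also have "\<dots> \<le> cfac eps n k * (g * ((dF + 1 + W) / (DF + 2)))"
            using mult_right_mono[OF c1, of "g * ((dF + 1 + W) / (DF + 2))"] c1 g0 dF0 Wpos DFpos by simp
          finally show ?thesis by (simp add: mult_ac)
        qed
        with step have "(dF + W) / DF \<le> cfac eps n k * g * ((dF + 1 + W) / (DF + 2))" by linarith
        then have fin: "(dF + W) / DF * rF \<le> cfac eps n k * g * ((dF + 1 + W) / (DF + 2)) * rF"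
          using rF0 by (rule mult_right_mono)
        show ?thesis unfolding L R cS using fin True rr by (simp add: mult_ac)
      next
        case False
        have "remove_incident (insert e F) y = insert e (remove_incident F y)"
          using False by (auto simp: remove_incident_def)
        then have IH: "rF \<le> cfac eps n k * rE" unfolding rE_def rF_def
          apply simp
          apply (rule Suc.IH)
          using Suc.prems yV False by (auto simp: remove_incident_def)
        have "(dF + W) / DF * rF \<le> g * ((dF + W) / (DF + 2)) * (cfac eps n k * rE)"
          using step IH rF0 dF0 Wpos DFpos g0 by (intro mult_mono) auto
        then show ?thesis unfolding L R cS using False by (simp add: mult_ac)
      qed
    qed
  qed
qed

lemma sqrt_sum: "(\<Sum>j<n. 1 / sqrt (real (Suc j))) \<le> 2 * sqrt (real n)"
proof (induction n)
  case 0 then show ?case by simp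
next
  case (Suc n)
  define a where "a = sqrt (real (Suc n))"
  define b where "b = sqrt (real n)"
  have apos: "a > 0" unfolding a_def by simp
  have b0: "b \<ge> 0" unfolding b_def by simp
  have ab: "a^2 = b^2 + 1" unfolding a_def b_def by simp
  have "2 * a^2 - 2 * a * b \<ge> 1"
  proof -
    have "(a - b)^2 \<ge> 0" by simp
    then show ?thesis using ab by (simp add: power2_eq_square algebra_simps)
  qed
  then have "1 / a \<le> 2 * a - 2 * b" using apos
    by (simp add: divide_simps power2_eq_square algebra_simps)
  then show ?case using Suc unfolding a_def b_def by simp
qed

lemma cfac_le: assumes eps: "eps > 0" shows "cfac eps n n \<le> exp eps"
proof (cases "n = 0")
  case True then show ?thesis using eps by (simp add: cfac_def)
next
  case False
  have trm: "2 / (real (Suc j) * noise_weight eps n (n - j)) = eps / (2 * sqrt n) * (1 / sqrt (real (Suc j)))"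
    if "j < n" for j
  proof -
    define sj where "sj = sqrt (real (Suc j))"
    define r where "r = sqrt (real n)"
    have W: "noise_weight eps n (n - j) = (4/eps) * (r / sj)"
      using W_eq[of j n eps] that unfolding r_def sj_def by (simp add: real_sqrt_divide del: of_nat_Suc)
    have S: "real (Suc j) = sj * sj" unfolding sj_def by (simp del: of_nat_Suc)
    have pos: "sj > 0" "r > 0" using False unfolding sj_def r_def by auto
    have "2 / (real (Suc j) * noise_weight eps n (n - j)) = 2 / ((sj * sj) * ((4/eps) * (r / sj)))"
      by (simp only: W S)
    also have "\<dots> = eps / (2 * r) * (1 / sj)" using pos eps by (simp add: field_simps)
    finally show ?thesis unfolding r_def sj_def .
  qed
  have "cfac eps n n \<le> (\<Prod>j<n. exp (2 / (real (Suc j) * noise_weight eps n (n - j))))"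
    unfolding cfac_def
  proof (rule prod_mono)
    fix j assume "j \<in> {..<n}"
    then have "noise_weight eps n (n - j) > 0" using W_props(1)[OF eps, of j n] by auto
    then show "0 \<le> 1 + 2 / (real (Suc j) * noise_weight eps n (n - j)) \<and>
      1 + 2 / (real (Suc j) * noise_weight eps n (n - j)) \<le> exp (2 / (real (Suc j) * noise_weight eps n (n - j)))"
      using exp_ge_add_one_self[of "2 / (real (Suc j) * noise_weight eps n (n - j))"]
      by (simp add: add.commute)
  qed
  also have "\<dots> = exp (\<Sum>j<n. 2 / (real (Suc j) * noise_weight eps n (n - j)))"
    by (simp add: exp_sum)
  also have "(\<Sum>j<n. 2 / (real (Suc j) * noise_weight eps n (n - j))) = eps / (2 * sqrt n) * (\<Sum>j<n. 1 / sqrt (real (Suc j)))"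
    unfolding sum_distrib_left by (rule sum.cong) (simp_all only: trm lessThan_iff)
  also have "\<dots> \<le> eps / (2 * sqrt n) * (2 * sqrt n)"
    using sqrt_sum[of n] eps by (intro mult_left_mono) auto
  also have "\<dots> = eps" using False by simp
  finally show ?thesis by simp
qed

theorem mainTheorem6:
  fixes V :: "'a set" and eps :: real and A B :: "'a set set" and P :: "'a list set"
  assumes "finite V"
    and "eps > 0"
    and "edge_set_on V A" and "edge_set_on V B"
    and "\<exists>e. (A - B) \<union> (B - A) = {e}"
    and "P \<subseteq> {xs. distinct xs \<and> set xs = V}"
  shows "measure_pmf.prob (ALG eps V A) P \<le> exp eps * measure_pmf.prob (ALG eps V B) P"
proof -
  obtain e where ed: "(A - B) \<union> (B - A) = {e}" using assms(5) by blast
  have fA: "finite A"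
  proof (rule finite_subset)
    show "A \<subseteq> Pow V" using assms(3) unfolding edge_set_on_def by auto
    show "finite (Pow V)" using assms(1) by simp
  qed
  have fB: "finite B"
  proof (rule finite_subset)
    show "B \<subseteq> Pow V" using assms(4) unfolding edge_set_on_def by auto
    show "finite (Pow V)" using assms(1) by simp
  qed
  have pw: "pmf (ALG eps V A) xs \<le> exp eps * pmf (ALG eps V B) xs" for xs
  proof (cases "e \<in> A")
    case True
    have h: "\<And>x. ((x \<in> A \<and> x \<notin> B) \<or> (x \<in> B \<and> x \<notin> A)) \<longleftrightarrow> x = e"
      using ed by (simp add: set_eq_iff)
    have eB: "e \<notin> B" using h[of e] True by simp
    have AB: "A = insert e B"
    proof (rule set_eqI)
      fix x show "x \<in> A \<longleftrightarrow> x \<in> insert e B" using h[of x] True eB by auto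
    qed
    have ev: "e \<subseteq> V" "card e = 2" using assms(3) True unfolding edge_set_on_def by auto
    have "pmf (ALG eps V A) xs \<le> (1 + eps/4) * pmf (ALG eps V B) xs"
      unfolding ALG_def AB by (rule dir1) (use assms(1,2) fB eB ev in auto)
    also have "\<dots> \<le> exp eps * pmf (ALG eps V B) xs"
    proof (rule mult_right_mono)
      show "1 + eps/4 \<le> exp eps" using exp_ge_add_one_self[of eps] assms(2) by linarith
    qed simp
    finally show ?thesis .
  next
    case False
    have h: "\<And>x. ((x \<in> A \<and> x \<notin> B) \<or> (x \<in> B \<and> x \<notin> A)) \<longleftrightarrow> x = e"
      using ed by (simp add: set_eq_iff)
    have eA: "e \<notin> A" using False .
    have eB: "e \<in> B" using h[of e] False by simp
    have AB: "B = insert e A"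
    proof (rule set_eqI)
      fix x show "x \<in> B \<longleftrightarrow> x \<in> insert e A" using h[of x] eA eB by auto
    qed
    have ev: "e \<subseteq> V" "card e = 2" using assms(4) eB unfolding edge_set_on_def by auto
    have "pmf (ALG eps V A) xs \<le> cfac eps (card V) (card V) * pmf (ALG eps V B) xs"
      unfolding ALG_def AB by (rule dir2) (use assms(1,2) fA eA ev in auto)
    also have "\<dots> \<le> exp eps * pmf (ALG eps V B) xs"
      by (rule mult_right_mono) (use cfac_le[OF assms(2)] in auto)
    finally show ?thesis .
  qed
  have fP: "finite P"
  proof (rule finite_subset)
    show "P \<subseteq> {xs. set xs \<subseteq> V \<and> length xs = card V}"
    proof
      fix xs assume "xs \<in> P"
      then have "distinct xs" "set xs = V" using assms(6) by auto
      then show "xs \<in> {xs. set xs \<subseteq> V \<and> length xs = card V}"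
        using distinct_card[of xs] by simp
    qed
    show "finite {xs. set xs \<subseteq> V \<and> length xs = card V}"
      by (rule finite_lists_length_eq[OF assms(1)])
  qed
  have "measure_pmf.prob (ALG eps V A) P = (\<Sum>xs\<in>P. pmf (ALG eps V A) xs)"
    by (rule measure_measure_pmf_finite[OF fP])
  also have "\<dots> \<le> (\<Sum>xs\<in>P. exp eps * pmf (ALG eps V B) xs)"
    by (rule sum_mono) (rule pw)
  also have "\<dots> = exp eps * measure_pmf.prob (ALG eps V B) P"
    by (simp add: measure_measure_pmf_finite[OF fP] sum_distrib_left)
  finally show ?thesis .
qed

end
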